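(* Let $n\ge1$, $0\le p\le n$, $r>0$, and let $u:\Delta^n_p(r)\to[0,\infty]$ be a convex function. Then for every $r'$ with $\frac{r}{2}\le r'<r$ and every $x\in\Delta^n_p(r')$ with $x_1,\dots,x_p>0$, \[ u(x)\le\frac{(r')^p}{(r-r')^n}\int_{\Delta^n_p(r)}u\,d\mathbf{x}\cdot\frac{1}{\prod_{i=1}^p x_i}. \]
   Context: For $r>0$ and $0\le p\le n$, $\Delta^n_p(r):=\{x\in[0,\infty)^p\times(-r,r)^{n-p}\;:\;\sum_{i=1}^p x_i<r\}\subset\mathbb{R}^n$. $d\mathbf{x}$ is the $n$-dimensional Lebesgue measure. Convexity of $[0,\infty]$-valued functions is meant with the usual conventions for $+\infty$. *)

theory Defs
  imports "HOL-Analysis.Analysis"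
begin

text \<open>The domain Delta^n_p(r) in R^n = real^'n, where the p "nonnegative" coordinates
  form the index set P (card P = p) and the remaining n - p coordinates lie in (-r,r).\<close>
definition Delta :: "'n::finite set \<Rightarrow> real \<Rightarrow> (real^'n) set" where
  "Delta P r = {x. (\<forall>i\<in>P. 0 \<le> x$i) \<and> (\<forall>i\<in>-P. -r < x$i \<and> x$i < r) \<and> (\<Sum>i\<in>P. x$i) < r}"

text \<open>Convexity of a [0,\<infinity>]-valued function (ennreal arithmetic, 0 * \<infinity> = 0).\<close>
definition convex_on_ennreal :: "'a::real_vector set \<Rightarrow> ('a \<Rightarrow> ennreal) \<Rightarrow> bool" where
  "convex_on_ennreal S f \<longleftrightarrow> convex S \<and>
     (\<forall>x\<in>S. \<forall>y\<in>S. \<forall>t::real. 0 \<le> t \<and> t \<le> 1 \<longrightarrow>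
        f ((1 - t) *\<^sub>R x + t *\<^sub>R y) \<le> ennreal (1 - t) * f x + ennreal t * f y)"

end

theory Submission
  imports Defs
begin

lemma nn_integral_lebesgue_pm:
  fixes f :: "'a::euclidean_space \<Rightarrow> ennreal" and s :: real
  assumes f: "f \<in> borel_measurable lebesgue" and s: "\<bar>s\<bar> = 1"
  shows "(\<integral>\<^sup>+y. f y \<partial>lebesgue) = (\<integral>\<^sup>+h. f (a + s *\<^sub>R h) \<partial>lebesgue)"
    and "(\<lambda>h. f (a + s *\<^sub>R h)) \<in> borel_measurable lebesgue"
proof -
  have s0: "s \<noteq> 0" using s by auto
  have T: "(\<lambda>h. a + (\<Sum>j\<in>Basis. (s * (h \<bullet> j)) *\<^sub>R j)) = (\<lambda>h. a + s *\<^sub>R h)"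
  proof
    fix h :: 'a
    have "(\<Sum>j\<in>Basis. (s * (h \<bullet> j)) *\<^sub>R j) = s *\<^sub>R (\<Sum>j\<in>Basis. (h \<bullet> j) *\<^sub>R j)"
      by (simp add: scaleR_sum_right)
    then show "a + (\<Sum>j\<in>Basis. (s * (h \<bullet> j)) *\<^sub>R j) = a + s *\<^sub>R h"
      by (simp add: euclidean_representation)
  qed
  have eq: "lebesgue = density (distr lebesgue lebesgue (\<lambda>h. a + s *\<^sub>R h)) (\<lambda>_. ennreal 1)"
    using lebesgue_affine_euclidean[of "\<lambda>_. s" a] s0 s unfolding T by simp
  have meas: "(\<lambda>h. a + s *\<^sub>R h) \<in> lebesgue \<rightarrow>\<^sub>M lebesgue"
    using lebesgue_affine_measurable[of "\<lambda>_. s" a] s0 unfolding T by simp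
  show "(\<lambda>h. f (a + s *\<^sub>R h)) \<in> borel_measurable lebesgue"
    using measurable_compose[OF meas f] by (simp add: o_def)
  have "(\<integral>\<^sup>+y. f y \<partial>lebesgue) = (\<integral>\<^sup>+y. f y \<partial>density (distr lebesgue lebesgue (\<lambda>h. a + s *\<^sub>R h)) (\<lambda>_. ennreal 1))"
    by (rule arg_cong[where f="\<lambda>M. integral\<^sup>N M f", OF eq])
  also have "\<dots> = (\<integral>\<^sup>+y. ennreal 1 * f y \<partial>distr lebesgue lebesgue (\<lambda>h. a + s *\<^sub>R h))"
    using f by (subst nn_integral_density) auto
  also have "\<dots> = (\<integral>\<^sup>+h. f (a + s *\<^sub>R h) \<partial>lebesgue)"
    using f meas by (subst nn_integral_distr) auto
  finally show "(\<integral>\<^sup>+y. f y \<partial>lebesgue) = (\<integral>\<^sup>+h. f (a + s *\<^sub>R h) \<partial>lebesgue)" .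
qed

lemma Delta_bounded: "bounded (Delta P r)"
proof -
  have "Delta P r \<subseteq> cbox (\<chi> i. -r) (\<chi> i. r)"
  proof
    fix y assume y: "y \<in> Delta P r"
    show "y \<in> cbox (\<chi> i. -r) (\<chi> i. r)"
      unfolding mem_box_cart
    proof
      fix i
      show "(\<chi> i. -r) $ i \<le> y $ i \<and> y $ i \<le> (\<chi> i. r) $ i"
      proof (cases "i \<in> P")
        case True
        have "y$i \<le> (\<Sum>j\<in>P. y$j)"
          using y True by (intro member_le_sum) (auto simp: Delta_def)
        then show ?thesis using y True by (auto simp: Delta_def)
      next
        case False
        then show ?thesis using y by (force simp: Delta_def)
      qed
    qed
  qed
  then show ?thesis by (meson bounded_cbox bounded_subset)
qed

lemma convex_meas:
  fixes u :: "real^'n \<Rightarrow> ennreal"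
  assumes cv: "convex_on_ennreal (Delta P r) u"
  shows "(\<lambda>y. u y * indicator (Delta P r) y) \<in> borel_measurable lebesgue"
proof (rule borel_measurableI_le)
  fix c :: ennreal
  let ?D = "Delta P r"
  let ?S = "{y\<in>?D. u y \<le> c}"
  have "convex ?S"
    unfolding convex_def
  proof (intro ballI allI impI)
    fix y z and a b :: real
    assume y: "y \<in> ?S" and z: "z \<in> ?S" and ab: "0 \<le> a" "0 \<le> b" "a + b = 1"
    have cD: "convex ?D" using cv by (simp add: convex_on_ennreal_def)
    have a: "a = 1 - b" using ab by simp
    have "u ((1 - b) *\<^sub>R y + b *\<^sub>R z) \<le> ennreal (1 - b) * u y + ennreal b * u z"
      using cv y z ab by (auto simp: convex_on_ennreal_def)
    also have "\<dots> \<le> ennreal (1 - b) * c + ennreal b * c"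
      using y z by (intro add_mono mult_left_mono) auto
    also have "\<dots> = (ennreal (1 - b) + ennreal b) * c" by (simp add: distrib_right)
    also have "\<dots> = c" using ab by (subst ennreal_plus[symmetric]) auto
    finally have "u ((1 - b) *\<^sub>R y + b *\<^sub>R z) \<le> c" .
    moreover have "(1 - b) *\<^sub>R y + b *\<^sub>R z \<in> ?D"
      using cD y z ab unfolding convex_def a by auto
    ultimately show "a *\<^sub>R y + b *\<^sub>R z \<in> ?S" unfolding a by auto
  qed
  moreover have "bounded ?S" using Delta_bounded by (rule bounded_subset) auto
  ultimately have S: "?S \<in> sets lebesgue" using measurable_convex by blast
  have "convex ?D" using cv by (simp add: convex_on_ennreal_def)
  then have D: "?D \<in> sets lebesgue" using measurable_convex Delta_bounded by blast
  have "{y \<in> space lebesgue. u y * indicator ?D y \<le> c} = ?S \<union> (space lebesgue - ?D)"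
    by (auto simp: indicator_def)
  also have "\<dots> \<in> sets lebesgue" by (rule sets.Un[OF S sets.compl_sets[OF D]])
  finally show "{y \<in> space lebesgue. u y * indicator ?D y \<le> c} \<in> sets lebesgue" .
qed

theorem mainTheorem2:
  fixes u :: "real^'n \<Rightarrow> ennreal" and P :: "'n set"
    and r r' :: real and x :: "real^'n"
  assumes "r > 0"
    and "convex_on_ennreal (Delta P r) u"
    and "r / 2 \<le> r'" and "r' < r"
    and "x \<in> Delta P r'"
    and "\<forall>i\<in>P. x$i > 0"
  shows "u x \<le> ennreal (r' ^ card P / (r - r') ^ CARD('n))
                 * (\<integral>\<^sup>+ y \<in> Delta P r. u y \<partial>lebesgue)
                 * ennreal (1 / (\<Prod>i\<in>P. x$i))"
proof -
  note r = assms(1) and cv = assms(2) and r1 = assms(3) and r2 = assms(4) and xD = assms(5)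
    and xpos = assms(6)
  let ?D = "Delta P r"
  define f where "f = (\<lambda>y. u y * indicator ?D y)"
  define I where "I = (\<integral>\<^sup>+ y. f y \<partial>lebesgue)"
  have fm: "f \<in> borel_measurable lebesgue" unfolding f_def using convex_meas[OF cv] .
  have r'pos: "r' > 0" using r r1 by linarith
  define t where "t = (r - r') / r'"
  have t0: "t > 0" using r'pos r2 by (simp add: t_def)
  have t1: "t \<le> 1" using r'pos r1 by (simp add: t_def field_simps)
  have tr: "(1 + t) * r' = r" using r'pos by (simp add: t_def field_simps)
  define c :: "real^'n" where "c = (\<chi> i. if i \<in> P then t * x$i else r - r')"
  have cpos: "c$i > 0" for i using t0 xpos r2 by (auto simp: c_def)
  define B where "B = cbox (-c) c"
  have xsum: "(\<Sum>i\<in>P. x$i) < r'" and xnP: "\<And>i. i \<notin> P \<Longrightarrow> -r' < x$i \<and> x$i < r'"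
    using xD by (auto simp: Delta_def)
  have inD: "x + h \<in> ?D" if h: "\<And>i. \<bar>h$i\<bar> \<le> c$i" for h
  proof -
    have hP: "\<bar>h$i\<bar> \<le> t * x$i" if "i \<in> P" for i using h[of i] that by (simp add: c_def)
    have hN: "\<bar>h$i\<bar> \<le> r - r'" if "i \<notin> P" for i using h[of i] that by (simp add: c_def)
    have "0 \<le> x$i + h$i" if "i \<in> P" for i
    proof -
      have "t * x$i \<le> x$i" using t1 xpos that by (simp add: mult_le_cancel_right1)
      then show ?thesis using hP[OF that] by linarith
    qed
    moreover have "(\<Sum>i\<in>P. (x + h)$i) < r"
    proof -
      have "(\<Sum>i\<in>P. (x + h)$i) \<le> (\<Sum>i\<in>P. (1 + t) * x$i)"
        using hP by (intro sum_mono) (auto simp: algebra_simps abs_le_iff)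
      also have "\<dots> = (1 + t) * (\<Sum>i\<in>P. x$i)" by (simp add: sum_distrib_left)
      also have "\<dots> < (1 + t) * r'" using xsum t0 by simp
      finally show ?thesis using tr by simp
    qed
    moreover have "- r < x$i + h$i \<and> x$i + h$i < r" if "i \<notin> P" for i
      using xnP[OF that] hN[OF that] by (auto simp: abs_le_iff)
    ultimately show ?thesis by (auto simp: Delta_def)
  qed
  have Bab: "h \<in> B \<longleftrightarrow> (\<forall>i. \<bar>h$i\<bar> \<le> c$i)" for h
    unfolding B_def mem_box_cart abs_le_iff by (auto simp: minus_le_iff)
  have pt: "u x * indicator B h \<le> ennreal (1/2) * f (x + 1 *\<^sub>R h) + ennreal (1/2) * f (x + (-1) *\<^sub>R h)" for h
  proof (cases "h \<in> B")
    case True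
    then have h1: "\<And>i. \<bar>h$i\<bar> \<le> c$i" and h2: "\<And>i. \<bar>(-h)$i\<bar> \<le> c$i" using Bab by auto
    have p1: "x + h \<in> ?D" using inD[OF h1] .
    have p2: "x - h \<in> ?D" using inD[OF h2] by simp
    have H: "\<And>a b t. a \<in> ?D \<Longrightarrow> b \<in> ?D \<Longrightarrow> 0 \<le> t \<Longrightarrow> t \<le> 1 \<Longrightarrow>
        u ((1 - t) *\<^sub>R a + t *\<^sub>R b) \<le> ennreal (1 - t) * u a + ennreal t * u b"
      using cv unfolding convex_on_ennreal_def by blast
    have eq: "(1/2::real) *\<^sub>R (x - h) + (1/2::real) *\<^sub>R (x + h) = x"
    proof -
      have "(1/2::real) *\<^sub>R (x - h) + (1/2::real) *\<^sub>R (x + h) = (1/2::real) *\<^sub>R ((x - h) + (x + h))"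
        by (simp only: scaleR_add_right)
      also have "(x - h) + (x + h) = 2 *\<^sub>R x" by (simp add: scaleR_2)
      finally show ?thesis by simp
    qed
    have hh: "(1::real) - 1/2 = 1/2" by simp
    have "u ((1 - 1/2) *\<^sub>R (x - h) + (1/2) *\<^sub>R (x + h)) \<le> ennreal (1 - 1/2) * u (x - h) + ennreal (1/2) * u (x + h)"
      by (rule H[OF p2 p1]) auto
    then have "u x \<le> ennreal (1/2) * u (x - h) + ennreal (1/2) * u (x + h)" unfolding hh eq .
    then show ?thesis using True p1 p2 by (simp add: f_def add.commute)
  next
    case False
    then show ?thesis by simp
  qed
  have m1: "(\<lambda>h. f (x + 1 *\<^sub>R h)) \<in> borel_measurable lebesgue"
    using nn_integral_lebesgue_pm(2)[OF fm, of 1 x] by simp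
  have m2: "(\<lambda>h. f (x + (-1) *\<^sub>R h)) \<in> borel_measurable lebesgue"
    using nn_integral_lebesgue_pm(2)[OF fm, of "-1" x] by simp
  have Bsets: "B \<in> sets lebesgue" by (simp add: B_def)
  have "u x * emeasure lebesgue B = (\<integral>\<^sup>+h. u x * indicator B h \<partial>lebesgue)"
    using Bsets by (simp add: nn_integral_cmult_indicator)
  also have "\<dots> \<le> (\<integral>\<^sup>+h. ennreal (1/2) * f (x + 1 *\<^sub>R h) + ennreal (1/2) * f (x + (-1) *\<^sub>R h) \<partial>lebesgue)"
    using pt by (intro nn_integral_mono) auto
  also have "\<dots> = ennreal (1/2) * (\<integral>\<^sup>+h. f (x + 1 *\<^sub>R h) \<partial>lebesgue) + ennreal (1/2) * (\<integral>\<^sup>+h. f (x + (-1) *\<^sub>R h) \<partial>lebesgue)"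
    using m1 m2 by (simp add: nn_integral_add nn_integral_cmult)
  also have "\<dots> = ennreal (1/2) * I + ennreal (1/2) * I"
    using nn_integral_lebesgue_pm(1)[OF fm, of 1 x] nn_integral_lebesgue_pm(1)[OF fm, of "-1" x]
    unfolding I_def by simp
  also have "\<dots> = (ennreal (1/2) + ennreal (1/2)) * I" by (simp add: distrib_right)
  also have "\<dots> = I" by (subst ennreal_plus[symmetric]) auto
  finally have main: "u x * emeasure lebesgue B \<le> I" .
  define m where "m = measure lborel B"
  have Bne: "B \<noteq> {}" using Bab[of 0] cpos by (auto intro: less_imp_le)
  have emB: "emeasure lebesgue B = ennreal m"
    unfolding m_def B_def by (simp add: emeasure_eq_measure2)
  have "m = (\<Prod>i\<in>UNIV. c$i - (-c)$i)"
    unfolding m_def B_def using content_cbox_cart Bne B_def by metis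
  also have "\<dots> = (\<Prod>i\<in>UNIV. 2 * c$i)" by simp
  also have "\<dots> = 2 ^ CARD('n) * (\<Prod>i\<in>UNIV. c$i)" by (simp add: prod.distrib)
  also have "(\<Prod>i\<in>UNIV. c$i) = (\<Prod>i\<in>P. t * x$i) * (\<Prod>i\<in>-P. r - r')"
    unfolding c_def by (simp add: prod.If_cases Int_def Compl_eq)
  also have "\<dots> = t ^ card P * (\<Prod>i\<in>P. x$i) * (r - r') ^ (CARD('n) - card P)"
  proof -
    have cc: "card (- P) = CARD('n) - card P"
      by (metis Compl_eq_Diff_UNIV card_Diff_subset finite subset_UNIV)
    show ?thesis by (simp add: prod.distrib cc)
  qed
  finally have mval: "m = 2 ^ CARD('n) * (t ^ card P * (\<Prod>i\<in>P. x$i) * (r - r') ^ (CARD('n) - card P))" .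
  define K where "K = r' ^ card P / (r - r') ^ CARD('n) * (1 / (\<Prod>i\<in>P. x$i))"
  have prodpos: "(\<Prod>i\<in>P. x$i) > 0" using xpos by (simp add: prod_pos)
  have pn: "card P \<le> CARD('n)" by (simp add: card_mono)
  have "t ^ card P * r' ^ card P = (r - r') ^ card P"
    using r'pos by (simp add: t_def flip: power_mult_distrib)
  have "K * m = 2 ^ CARD('n)"
  proof -
    have e1: "t ^ card P * r' ^ card P = (r - r') ^ card P"
      using r'pos by (simp add: t_def flip: power_mult_distrib)
    have e2: "(r - r') ^ card P * (r - r') ^ (CARD('n) - card P) = (r - r') ^ CARD('n)"
      using pn by (simp flip: power_add)
    have "K * m = 2 ^ CARD('n) * ((t ^ card P * r' ^ card P) * (r - r') ^ (CARD('n) - card P)) / (r - r') ^ CARD('n)"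
    proof -
      have g: "\<And>A R X T Q (N::real). X \<noteq> 0 \<Longrightarrow> A / R * (1/X) * (N*(T*X*Q)) = N*((T*A)*Q)/R"
        by (simp add: field_simps)
      show ?thesis unfolding K_def mval
        by (rule g) (use prodpos in linarith)
    qed
    also have "\<dots> = 2 ^ CARD('n)" using e1 e2 r2 by simp
    finally show ?thesis .
  qed
  have Kpos: "K \<ge> 0" unfolding K_def using r'pos r2 prodpos by simp
  have mpos: "m \<ge> 0" unfolding m_def by simp
  have "u x = u x * 1" by simp
  also have "\<dots> \<le> u x * ennreal (K * m)"
    using \<open>K * m = 2 ^ CARD('n)\<close> by (intro mult_left_mono) auto
  also have "\<dots> = (u x * emeasure lebesgue B) * ennreal K"
    using Kpos mpos emB by (simp add: ennreal_mult mult_ac)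
  also have "\<dots> \<le> I * ennreal K" using main by (intro mult_right_mono) auto
  also have "\<dots> = ennreal (r' ^ card P / (r - r') ^ CARD('n))
                 * (\<integral>\<^sup>+ y \<in> Delta P r. u y \<partial>lebesgue)
                 * ennreal (1 / (\<Prod>i\<in>P. x$i))"
  proof -
    have AB: "ennreal (r' ^ card P / (r - r') ^ CARD('n) * (1 / (\<Prod>i\<in>P. x$i)))
       = ennreal (r' ^ card P / (r - r') ^ CARD('n)) * ennreal (1 / (\<Prod>i\<in>P. x$i))"
      by (rule ennreal_mult) (use r'pos r2 prodpos in auto)
    show ?thesis unfolding I_def f_def K_def AB by (simp only: mult_ac)
  qed
  finally show ?thesis .
qed

end
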